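(* Let $H$ be a separable Hilbert space, $0<p<1$, and $T$ any nonzero bounded linear operator on $H$. Then there exists a frame $\{f_n\}$ for $H$ such that $\{\langle Tf_n,f_n\rangle\}\notin\ell^p$.
   Context: A sequence $\{f_n\}$ in $H$ is a frame if there are constants $0<C_1\le C_2$ such that $C_1\|f\|^2\le\sum_n|\langle f,f_n\rangle|^2\le C_2\|f\|^2$ for all $f\in H$. *)

theory Defs
  imports "HOL-Analysis.Analysis"
begin

text \<open>Complex Hilbert spaces: a Banach space (over the reals, as in HOL-Analysis) carrying
  a complex scalar multiplication compatible with the real one, and a complex inner
  product, linear in the first argument, conjugate-symmetric, inducing the norm.\<close>

class complex_hilbert = banach +
  fixes scaleC :: "complex \<Rightarrow> 'a \<Rightarrow> 'a" (infixr "*\<^sub>C" 75)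
    and cinner :: "'a \<Rightarrow> 'a \<Rightarrow> complex"
  assumes scaleC_add_right: "a *\<^sub>C (x + y) = a *\<^sub>C x + a *\<^sub>C y"
    and scaleC_add_left: "(a + b) *\<^sub>C x = a *\<^sub>C x + b *\<^sub>C x"
    and scaleC_scaleC: "a *\<^sub>C (b *\<^sub>C x) = (a * b) *\<^sub>C x"
    and scaleC_one: "1 *\<^sub>C x = x"
    and scaleR_scaleC: "scaleR r x = complex_of_real r *\<^sub>C x"
    and cinner_commute: "cinner x y = cnj (cinner y x)"
    and cinner_add_left: "cinner (x + y) z = cinner x z + cinner y z"
    and cinner_scaleC_left: "cinner (a *\<^sub>C x) y = a * cinner x y"
    and cinner_self_norm: "cinner x x = complex_of_real ((norm x)\<^sup>2)"

definition separable_space :: "'a::topological_space itself \<Rightarrow> bool" where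
  "separable_space _ \<longleftrightarrow> (\<exists>D::'a set. countable D \<and> closure D = UNIV)"

definition complex_bounded_linear :: "('a::complex_hilbert \<Rightarrow> 'b::complex_hilbert) \<Rightarrow> bool" where
  "complex_bounded_linear T \<longleftrightarrow> bounded_linear T \<and> (\<forall>c x. T (c *\<^sub>C x) = c *\<^sub>C T x)"

definition is_frame :: "(nat \<Rightarrow> 'a::complex_hilbert) \<Rightarrow> bool" where
  "is_frame F \<longleftrightarrow> (\<exists>C1 C2::real. 0 < C1 \<and> C1 \<le> C2 \<and>
     (\<forall>f. summable (\<lambda>n. (cmod (cinner f (F n)))\<^sup>2) \<and>
          C1 * (norm f)\<^sup>2 \<le> (\<Sum>n. (cmod (cinner f (F n)))\<^sup>2) \<and>
          (\<Sum>n. (cmod (cinner f (F n)))\<^sup>2) \<le> C2 * (norm f)\<^sup>2))"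

definition in_ell_p :: "real \<Rightarrow> (nat \<Rightarrow> complex) \<Rightarrow> bool" where
  "in_ell_p p a \<longleftrightarrow> summable (\<lambda>n. (cmod (a n)) powr p)"

end

theory Submission imports Defs begin

lemma scaleC_zero_left[simp]: "(0::complex) *\<^sub>C (x::'a::complex_hilbert) = 0"
  using scaleC_add_left[of 0 0 x] by simp

lemma scaleC_zero_right[simp]: "a *\<^sub>C (0::'a::complex_hilbert) = 0"
  using scaleC_add_right[of a 0 0] by simp

lemma cinner_zero_left[simp]: "cinner (0::'a::complex_hilbert) y = 0"
  using cinner_add_left[of 0 0 y] by simp

lemma cinner_zero_right[simp]: "cinner (y::'a::complex_hilbert) 0 = 0"
  using cinner_commute[of y 0] by simp

lemma cinner_add_right: "cinner (x::'a::complex_hilbert) (y + z) = cinner x y + cinner x z"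
  by (metis cinner_add_left cinner_commute complex_cnj_add)

lemma cinner_scaleC_right: "cinner (x::'a::complex_hilbert) (a *\<^sub>C y) = cnj a * cinner x y"
  by (metis cinner_scaleC_left cinner_commute complex_cnj_mult)

lemma cinner_minus_left: "cinner (- x::'a::complex_hilbert) y = - cinner x y"
proof -
  have "- x = complex_of_real (-1) *\<^sub>C x" using scaleR_scaleC[of "-1" x] by simp
  then show ?thesis by (simp add: cinner_scaleC_left)
qed

lemma cinner_diff_left: "cinner (x - z::'a::complex_hilbert) y = cinner x y - cinner z y"
  using cinner_add_left[of x "-z" y] cinner_minus_left[of z y] by simp

lemma cinner_diff_right: "cinner (y::'a::complex_hilbert) (x - z) = cinner y x - cinner y z"
  by (metis cinner_commute cinner_diff_left complex_cnj_diff)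

lemma cinner_sum_left: "cinner (sum f A :: 'a::complex_hilbert) y = (\<Sum>i\<in>A. cinner (f i) y)"
  by (induct A rule: infinite_finite_induct) (simp_all add: cinner_add_left)

lemma cinner_sum_right: "cinner (y :: 'a::complex_hilbert) (sum f A) = (\<Sum>i\<in>A. cinner y (f i))"
  by (induct A rule: infinite_finite_induct) (simp_all add: cinner_add_right)

lemma norm_sq_cinner: "(norm (x::'a::complex_hilbert))\<^sup>2 = Re (cinner x x)"
  by (simp add: cinner_self_norm)

lemma cinner_self_eq_0: "cinner (x::'a::complex_hilbert) x = 0 \<longleftrightarrow> x = 0"
  by (simp add: cinner_self_norm)

lemma norm_scaleC: "norm (a *\<^sub>C (x::'a::complex_hilbert)) = cmod a * norm x"
proof -
  have e: "cinner (a *\<^sub>C x) (a *\<^sub>C x) = a * cnj a * cinner x x"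
    by (simp add: cinner_scaleC_left cinner_scaleC_right mult.assoc)
  have "(norm (a *\<^sub>C x))\<^sup>2 = Re (a * cnj a * cinner x x)"
    by (simp only: norm_sq_cinner e)
  also have "\<dots> = (cmod a * norm x)\<^sup>2"
    by (simp add: cinner_self_norm complex_mult_cnj power_mult_distrib cmod_power2)
  finally show ?thesis
    by (metis norm_ge_zero power2_eq_imp_eq mult_nonneg_nonneg)
qed

lemma pythag: "cinner (x::'a::complex_hilbert) y = 0 \<Longrightarrow> (norm (x + y))\<^sup>2 = (norm x)\<^sup>2 + (norm y)\<^sup>2"
proof -
  assume h: "cinner x y = 0"
  then have h2: "cinner y x = 0" by (metis cinner_commute complex_cnj_zero)
  show ?thesis
    by (simp add: norm_sq_cinner cinner_add_left cinner_add_right h h2)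
qed


definition ONN :: "(nat \<Rightarrow> 'a::complex_hilbert) \<Rightarrow> nat \<Rightarrow> bool" where
  "ONN e N \<longleftrightarrow> (\<forall>j<N. \<forall>k<N. j \<noteq> k \<longrightarrow> cinner (e j) (e k) = 0) \<and>
     (\<forall>j<N. e j = 0 \<or> cinner (e j) (e j) = 1)"

definition proj :: "(nat \<Rightarrow> 'a::complex_hilbert) \<Rightarrow> nat \<Rightarrow> 'a \<Rightarrow> 'a" where
  "proj e N f = (\<Sum>k<N. cinner f (e k) *\<^sub>C e k)"

lemma proj_inner:
  assumes "ONN e N" "j < N"
  shows "cinner (proj e N f) (e j) = cinner f (e j)"
proof -
  have "cinner (proj e N f) (e j) = (\<Sum>k<N. cinner f (e k) * cinner (e k) (e j))"
    by (simp add: proj_def cinner_sum_left cinner_scaleC_left)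
  also have "\<dots> = (\<Sum>k<N. if k = j then cinner f (e j) else 0)"
  proof (rule sum.cong)
    fix k assume k: "k \<in> {..<N}"
    show "cinner f (e k) * cinner (e k) (e j) = (if k = j then cinner f (e j) else 0)"
    proof (cases "k = j")
      case True
      then show ?thesis using assms unfolding ONN_def by (cases "e j = 0") auto
    next
      case False
      then show ?thesis using assms k unfolding ONN_def by auto
    qed
  qed simp
  also have "\<dots> = cinner f (e j)" using assms(2) by simp
  finally show ?thesis .
qed

lemma proj_orth:
  assumes "ONN e N" "j < N"
  shows "cinner (f - proj e N f) (e j) = 0"
  using proj_inner[OF assms] by (simp add: cinner_diff_left)

lemma proj_orth_sum:
  assumes "ONN e N" "M \<le> N"
  shows "cinner (f - proj e N f) (\<Sum>k<M. b k *\<^sub>C e k) = 0"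
  using proj_orth[OF assms(1)] assms(2)
  by (simp add: cinner_sum_right cinner_scaleC_right)

lemma proj_norm:
  assumes "ONN e N"
  shows "(norm f)\<^sup>2 = (norm (f - proj e N f))\<^sup>2 + (\<Sum>k<N. (cmod (cinner f (e k)))\<^sup>2)"
proof -
  have o: "cinner (f - proj e N f) (proj e N f) = 0"
    using proj_orth_sum[OF assms order.refl, of f "\<lambda>k. cinner f (e k)"] by (simp add: proj_def)
  have "cinner (proj e N f) (proj e N f) = (\<Sum>k<N. cnj (cinner f (e k)) * cinner (proj e N f) (e k))"
    by (subst (2) proj_def) (simp add: cinner_sum_right cinner_scaleC_right)
  also have "\<dots> = (\<Sum>k<N. complex_of_real ((cmod (cinner f (e k)))\<^sup>2))"
  proof (rule sum.cong)
    fix k assume "k \<in> {..<N}"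
    then have "cinner (proj e N f) (e k) = cinner f (e k)" using proj_inner[OF assms] by simp
    then show "cnj (cinner f (e k)) * cinner (proj e N f) (e k) = complex_of_real ((cmod (cinner f (e k)))\<^sup>2)"
      by (metis complex_norm_square mult.commute)
  qed simp
  finally have "(norm (proj e N f))\<^sup>2 = (\<Sum>k<N. (cmod (cinner f (e k)))\<^sup>2)"
    by (simp add: norm_sq_cinner)
  moreover have "f = (f - proj e N f) + proj e N f" by simp
  ultimately show ?thesis using pythag[OF o] by metis
qed

lemma proj_best:
  assumes "ONN e N" "M \<le> N"
  shows "norm (f - proj e N f) \<le> norm (f - (\<Sum>k<M. b k *\<^sub>C e k))"
proof -
  let ?P = "proj e N f" and ?g = "\<Sum>k<M. b k *\<^sub>C e k"
  have o1: "cinner (f - ?P) ?P = 0"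
    using proj_orth_sum[OF assms(1) order.refl, of f "\<lambda>k. cinner f (e k)"] by (simp add: proj_def)
  have o: "cinner (f - ?P) (?P - ?g) = 0"
    using o1 proj_orth_sum[OF assms] by (simp add: cinner_diff_right)
  have "f - ?g = (f - ?P) + (?P - ?g)" by simp
  then have "(norm (f - ?g))\<^sup>2 = (norm (f - ?P))\<^sup>2 + (norm (?P - ?g))\<^sup>2"
    using pythag[OF o] by metis
  then have "(norm (f - ?P))\<^sup>2 \<le> (norm (f - ?g))\<^sup>2"
    using zero_le_power2[of "norm (?P - ?g)"] by linarith
  from power2_le_imp_le[OF this norm_ge_zero] show ?thesis .
qed


definition gs_step :: "(nat \<Rightarrow> 'a::complex_hilbert) \<Rightarrow> 'a \<Rightarrow> nat \<Rightarrow> 'a" where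
  "gs_step e x n = (if x - proj e n x = 0 then 0
     else complex_of_real (1 / norm (x - proj e n x)) *\<^sub>C (x - proj e n x))"

primrec gsE :: "(nat \<Rightarrow> 'a::complex_hilbert) \<Rightarrow> nat \<Rightarrow> nat \<Rightarrow> 'a" where
  "gsE d 0 = (\<lambda>_. 0)"
| "gsE d (Suc n) = (gsE d n)(n := gs_step (gsE d n) (d n) n)"

definition gs :: "(nat \<Rightarrow> 'a::complex_hilbert) \<Rightarrow> nat \<Rightarrow> 'a" where
  "gs d n = gsE d (Suc n) n"

lemma gsE_gs: "k < n \<Longrightarrow> gsE d n k = gs d k"
proof (induction n)
  case 0 then show ?case by simp
next
  case (Suc n)
  then show ?case by (cases "k = n") (auto simp: gs_def)
qed

lemma proj_cong: "(\<And>k. k < n \<Longrightarrow> e k = e' k) \<Longrightarrow> proj e n x = proj e' n x"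
  unfolding proj_def by (intro sum.cong) auto

lemma gs_step_cong: "(\<And>k. k < n \<Longrightarrow> e k = e' k) \<Longrightarrow> gs_step e x n = gs_step e' x n"
  unfolding gs_step_def using proj_cong[of n e e' x] by simp

lemma gs_eq: "gs d n = gs_step (gs d) (d n) n"
proof -
  have "gs d n = gs_step (gsE d n) (d n) n" unfolding gs_def by simp
  also have "\<dots> = gs_step (gs d) (d n) n" by (rule gs_step_cong) (simp add: gsE_gs)
  finally show ?thesis .
qed

lemma gs_ONN: "ONN (gs d) n"
proof (induction n)
  case 0 then show ?case by (simp add: ONN_def)
next
  case (Suc n)
  let ?e = "gs d" and ?v = "d n - proj (gs d) n (d n)"
  have A: "\<forall>k<n. cinner (?e n) (?e k) = 0"
  proof (cases "?v = 0")
    case True then show ?thesis by (simp add: gs_eq[of d n] gs_step_def)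
  next
    case False
    then show ?thesis using proj_orth[OF Suc]
      by (simp add: gs_eq[of d n] gs_step_def cinner_scaleC_left)
  qed
  have B: "?e n = 0 \<or> cinner (?e n) (?e n) = 1"
  proof (cases "?v = 0")
    case True then show ?thesis by (simp add: gs_eq[of d n] gs_step_def)
  next
    case False
    then have en: "?e n = complex_of_real (1 / norm ?v) *\<^sub>C ?v"
      by (simp add: gs_eq[of d n] gs_step_def)
    have "cinner (?e n) (?e n) = complex_of_real (1 / norm ?v) * complex_of_real (1 / norm ?v) * cinner ?v ?v"
      unfolding en by (simp only: cinner_scaleC_left cinner_scaleC_right complex_cnj_complex_of_real mult.assoc)
    also have "\<dots> = complex_of_real ((1 / norm ?v)^2 * (norm ?v)^2)"
      by (simp only: cinner_self_norm of_real_mult power2_eq_square)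
    also have "\<dots> = 1" using False by (simp add: power2_eq_square)
    finally show ?thesis by simp
  qed
  have A': "\<forall>k<n. cinner (?e k) (?e n) = 0"
    using A by (metis cinner_commute complex_cnj_zero)
  show ?case using Suc A A' B unfolding ONN_def
    by (metis less_Suc_eq)
qed

lemma gs_span: "\<exists>b. d n = (\<Sum>k<Suc n. b k *\<^sub>C gs d k)"
proof -
  let ?e = "gs d" and ?v = "d n - proj (gs d) n (d n)"
  have v: "?v = complex_of_real (norm ?v) *\<^sub>C ?e n"
  proof (cases "?v = 0")
    case True then show ?thesis by simp
  next
    case False
    then have "complex_of_real (norm ?v) *\<^sub>C ?e n = (complex_of_real (norm ?v) * complex_of_real (1 / norm ?v)) *\<^sub>C ?v"
      by (simp add: gs_eq[of d n] gs_step_def scaleC_scaleC)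
    also have "\<dots> = ?v" using False by (simp add: scaleC_one)
    finally show ?thesis by simp
  qed
  define b where "b k = (if k < n then cinner (d n) (?e k) else complex_of_real (norm ?v))" for k
  have "(\<Sum>k<Suc n. b k *\<^sub>C ?e k) = proj ?e n (d n) + complex_of_real (norm ?v) *\<^sub>C ?e n"
    by (simp add: b_def proj_def)
  also have "\<dots> = d n" using v by simp
  finally show ?thesis by metis
qed


lemma gs_parseval:
  assumes dense: "closure (range d) = UNIV"
  shows "(\<lambda>k. (cmod (cinner f (gs d k)))\<^sup>2) sums (norm f)\<^sup>2"
  unfolding sums_def
proof (rule LIMSEQ_I)
  fix r :: real assume r: "0 < r"
  have "f \<in> closure (range d)" using dense by simp
  then obtain y where y: "y \<in> range d" "dist y f < sqrt r"
    using r unfolding closure_approachable by (meson real_sqrt_gt_zero)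
  then obtain n where yn: "y = d n" by auto
  obtain b where b: "d n = (\<Sum>k<Suc n. b k *\<^sub>C gs d k)" using gs_span by blast
  show "\<exists>no. \<forall>N\<ge>no. norm ((\<Sum>k<N. (cmod (cinner f (gs d k)))\<^sup>2) - (norm f)\<^sup>2) < r"
  proof (intro exI allI impI)
    fix N assume N: "Suc n \<le> N"
    have "norm (f - proj (gs d) N f) \<le> norm (f - d n)"
      using proj_best[OF gs_ONN N, where f=f and b=b] b by simp
    also have "\<dots> < sqrt r" using y yn by (simp add: dist_norm norm_minus_commute)
    finally have "norm (f - proj (gs d) N f) < sqrt r" .
    then have "(norm (f - proj (gs d) N f))\<^sup>2 < (sqrt r)\<^sup>2"
      by (intro power_strict_mono) auto
    then have "(norm (f - proj (gs d) N f))\<^sup>2 < r" using r by simp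
    then show "norm ((\<Sum>k<N. (cmod (cinner f (gs d k)))\<^sup>2) - (norm f)\<^sup>2) < r"
      using proj_norm[OF gs_ONN, of f d N] by simp
  qed
qed


lemma sums_interleave:
  fixes a b :: "nat \<Rightarrow> real"
  assumes "a sums A" "b sums B"
  shows "(\<lambda>m. if even m then a (m div 2) else b (m div 2)) sums (A + B)"
proof -
  have sm1: "strict_mono (\<lambda>n::nat. 2 * n)" by (auto simp: strict_mono_def)
  have sm2: "strict_mono (\<lambda>n::nat. 2 * n + 1)" by (auto simp: strict_mono_def)
  have "(\<lambda>n. (\<lambda>m. if even m then a (m div 2) else 0) (2 * n)) sums A" using assms(1) by simp
  then have 1: "(\<lambda>m. if even m then a (m div 2) else 0) sums A"
    by (subst (asm) sums_mono_reindex[OF sm1]) (auto simp: image_iff elim!: evenE)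
  have "(\<lambda>n. (\<lambda>m. if odd m then b (m div 2) else 0) (2 * n + 1)) sums B" using assms(2) by simp
  then have 2: "(\<lambda>m. if odd m then b (m div 2) else 0) sums B"
    by (subst (asm) sums_mono_reindex[OF sm2]) (auto simp: image_iff elim!: oddE)
  have e: "(\<lambda>m. (if even m then a (m div 2) else 0) + (if odd m then b (m div 2) else 0))
      = (\<lambda>m. if even m then a (m div 2) else b (m div 2))" by auto
  from sums_add[OF 1 2] show ?thesis unfolding e .
qed

lemma summable_odd:
  fixes h :: "nat \<Rightarrow> real"
  assumes "\<And>m. 0 \<le> h m" "summable h"
  shows "summable (\<lambda>n. h (2 * n + 1))"
proof -
  have sm2: "strict_mono (\<lambda>n::nat. 2 * n + 1)" by (auto simp: strict_mono_def)
  have "summable (\<lambda>m. if odd m then h m else 0)"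
    by (rule summable_comparison_test'[OF assms(2), of 0]) (simp add: assms(1))
  then have "summable (\<lambda>n. (\<lambda>m. if odd m then h m else 0) (2 * n + 1))"
    by (subst summable_mono_reindex[OF sm2]) (auto simp: image_iff elim!: oddE)
  then show ?thesis by simp
qed

lemma cs_unit:
  fixes u :: "'a::complex_hilbert"
  assumes "cinner u u = 1"
  shows "(cmod (cinner f u))\<^sup>2 \<le> (norm f)\<^sup>2"
proof -
  have "ONN (\<lambda>_. u) 1" using assms by (simp add: ONN_def)
  from proj_norm[OF this, of f] show ?thesis by simp
qed

lemma exists_nonzero_form:
  fixes T :: "'a::complex_hilbert \<Rightarrow> 'a"
  assumes "complex_bounded_linear T" "T \<noteq> (\<lambda>x. 0)"
  shows "\<exists>x. cinner (T x) x \<noteq> 0"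
proof (rule ccontr)
  assume "\<not> ?thesis"
  then have z: "\<And>x. cinner (T x) x = 0" by simp
  have lin: "linear T" using assms(1) by (simp add: complex_bounded_linear_def bounded_linear.linear)
  have hom: "\<And>c x. T (c *\<^sub>C x) = c *\<^sub>C T x" using assms(1) by (simp add: complex_bounded_linear_def)
  have s: "cinner (T x) y + cinner (T y) x = 0" for x y
    using z[of "x + y"] z[of x] z[of y]
    by (simp add: linear_add[OF lin] cinner_add_left cinner_add_right) (metis add.commute)
  have t: "cinner (T x) y = 0" for x y
  proof -
    have "cinner (T x) (\<i> *\<^sub>C y) + cinner (T (\<i> *\<^sub>C y)) x = 0" by (rule s)
    then have "- \<i> * cinner (T x) y + \<i> * cinner (T y) x = 0"
      by (simp add: hom cinner_scaleC_left cinner_scaleC_right)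
    then have "cinner (T y) x = cinner (T x) y"
      by (metis add.commute add_uminus_conv_diff complex_i_not_zero eq_iff_diff_eq_0 minus_mult_left mult_cancel_left)
    then show ?thesis using s[of x y] by simp
  qed
  have "T x = 0" for x using t[of x "T x"] by (simp add: cinner_self_eq_0)
  then show False using assms(2) by auto
qed


theorem proposition19:
  fixes T :: "'a::complex_hilbert \<Rightarrow> 'a" and p :: real
  assumes "separable_space TYPE('a)"
    and "0 < p" and "p < 1"
    and "complex_bounded_linear T"
    and "T \<noteq> (\<lambda>x. 0)"
  shows "\<exists>F::nat \<Rightarrow> 'a. is_frame F \<and> \<not> in_ell_p p (\<lambda>n. cinner (T (F n)) (F n))"
proof -
  obtain D :: "'a set" where D: "countable D" "closure D = UNIV"
    using assms(1) unfolding separable_space_def by blast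
  have "D \<noteq> {}" using D(2) by auto
  define d where "d = from_nat_into D"
  have dense: "closure (range d) = UNIV" using D \<open>D \<noteq> {}\<close> by (simp add: d_def)
  have hom: "\<And>c x. T (c *\<^sub>C x) = c *\<^sub>C T x" using assms(4) by (simp add: complex_bounded_linear_def)
  obtain x where x: "cinner (T x) x \<noteq> 0" using exists_nonzero_form[OF assms(4,5)] by blast
  have "x \<noteq> 0"
  proof
    assume "x = 0" then show False using x by simp
  qed
  define u where "u = complex_of_real (1 / norm x) *\<^sub>C x"
  have "norm u = 1"
    using \<open>x \<noteq> 0\<close> by (simp add: u_def norm_scaleC norm_divide)
  then have uu: "cinner u u = 1" by (simp add: cinner_self_norm)
  define z where "z = cinner (T u) u"
  have "z = complex_of_real (1 / norm x) * complex_of_real (1 / norm x) * cinner (T x) x"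
    by (simp add: z_def u_def hom cinner_scaleC_left cinner_scaleC_right)
  then have z0: "z \<noteq> 0" using x \<open>x \<noteq> 0\<close> by simp
  define c where "c n = sqrt (real (Suc n) powr (-1/p))" for n
  have c2: "(c n)\<^sup>2 = real (Suc n) powr (-1/p)" for n by (simp add: c_def)
  have "summable (\<lambda>n. real n powr (-1/p))"
    using assms(2,3) by (simp add: summable_real_powr_iff field_simps)
  then have sc: "summable (\<lambda>n. (c n)\<^sup>2)"
    unfolding c2 using summable_Suc_iff[where f = "\<lambda>n. real n powr (-1/p)"] by simp
  define S where "S = (\<Sum>n. (c n)\<^sup>2)"
  have S0: "0 \<le> S" unfolding S_def by (rule suminf_nonneg[OF sc]) simp
  define F where "F m = (if even m then gs d (m div 2) else complex_of_real (c (m div 2)) *\<^sub>C u)" for m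
  have key: "summable (\<lambda>m. (cmod (cinner f (F m)))\<^sup>2) \<and>
     1 * (norm f)\<^sup>2 \<le> (\<Sum>m. (cmod (cinner f (F m)))\<^sup>2) \<and>
     (\<Sum>m. (cmod (cinner f (F m)))\<^sup>2) \<le> (1 + S) * (norm f)\<^sup>2" for f
  proof (intro conjI)
    let ?K = "(cmod (cinner f u))\<^sup>2"
    have "(\<lambda>n. (c n)\<^sup>2 * ?K) sums (S * ?K)" unfolding S_def using sc by (intro sums_mult2 summable_sums)
    note il = sums_interleave[OF gs_parseval[OF dense, of f] this]
    have fe: "(\<lambda>m. (cmod (cinner f (F m)))\<^sup>2) = (\<lambda>m. if even m then (cmod (cinner f (gs d (m div 2))))\<^sup>2
          else (c (m div 2))\<^sup>2 * ?K)"
      by (auto simp: F_def cinner_scaleC_right norm_mult power_mult_distrib)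
    have "(\<lambda>m. (cmod (cinner f (F m)))\<^sup>2) sums ((norm f)\<^sup>2 + S * ?K)"
      unfolding fe by (rule il)
    then have su: "summable (\<lambda>m. (cmod (cinner f (F m)))\<^sup>2)"
      and eq: "(\<Sum>m. (cmod (cinner f (F m)))\<^sup>2) = (norm f)\<^sup>2 + S * ?K"
      by (auto simp: sums_iff)
    show "summable (\<lambda>m. (cmod (cinner f (F m)))\<^sup>2)" by (rule su)
    show "1 * (norm f)\<^sup>2 \<le> (\<Sum>m. (cmod (cinner f (F m)))\<^sup>2)"
      unfolding eq using S0 by simp
    have "S * ?K \<le> S * (norm f)\<^sup>2" using cs_unit[OF uu, of f] S0 by (simp add: mult_left_mono)
    then show "(\<Sum>m. (cmod (cinner f (F m)))\<^sup>2) \<le> (1 + S) * (norm f)\<^sup>2"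
      unfolding eq by (simp add: algebra_simps)
  qed
  have frame: "is_frame F"
    unfolding is_frame_def using key S0 by (intro exI[of _ 1] exI[of _ "1 + S"]) auto
  have notl: "\<not> in_ell_p p (\<lambda>n. cinner (T (F n)) (F n))"
  proof
    assume "in_ell_p p (\<lambda>n. cinner (T (F n)) (F n))"
    then have "summable (\<lambda>m. cmod (cinner (T (F m)) (F m)) powr p)" by (simp add: in_ell_p_def)
    from summable_odd[OF _ this] have "summable (\<lambda>n. cmod (cinner (T (F (2 * n + 1))) (F (2 * n + 1))) powr p)"
      by simp
    moreover have "cmod (cinner (T (F (2 * n + 1))) (F (2 * n + 1))) powr p = cmod z powr p * inverse (real (Suc n))" for n
    proof -
      have "cinner (T (F (2 * n + 1))) (F (2 * n + 1)) = complex_of_real ((c n)\<^sup>2) * z"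
        by (simp add: F_def hom z_def cinner_scaleC_left cinner_scaleC_right power2_eq_square)
      then have "cmod (cinner (T (F (2 * n + 1))) (F (2 * n + 1))) powr p = ((c n)\<^sup>2) powr p * cmod z powr p"
        using real_sqrt_ge_zero[of "real (Suc n) powr (-1/p)"]
        by (simp add: norm_mult powr_mult norm_power c_def del: real_sqrt_ge_zero)
      also have "((c n)\<^sup>2) powr p = real (Suc n) powr (-1)"
        unfolding c2 using assms(2) by (simp add: powr_powr)
      also have "\<dots> = inverse (real (Suc n))" by (simp add: powr_minus)
      finally show ?thesis by simp
    qed
    ultimately have "summable (\<lambda>n. cmod z powr p * inverse (real (Suc n)))" by simp
    then have "summable (\<lambda>n. inverse (real (Suc n)))" using z0 by simp
    then have "summable (\<lambda>n. inverse (real n))" using summable_Suc_iff[where f = "\<lambda>n. inverse (real n)"] by simp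
    then show False using not_summable_harmonic by blast
  qed
  show ?thesis using frame notl by blast
qed

end
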